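(* If $x,y\in X$ are distinct and form an asymptotic pair for $T$ (i.e. $\lim_{n\to\infty}d(T^n(x),T^n(y))=0$), then $\deg(x)$ and $\deg(y)$ are both finite and $|\deg(x)-\deg(y)|\leq1$. In particular, no point $x\neq p$ is asymptotic to $p=(v_{0,0},v_{1,0},v_{2,0},\ldots)$.
   Context: Paths and cycles: a graph is $G=(V,E)$ with $V$ finite and $E\subset V\times V$. A path is a finite sequence of vertices $(u_0,\dots,u_L)$ with $(u_j,u_{j+1})\in E$; its length is $|\cdot|=L$; a cycle is a path with $u_0=u_L$. For paths where one ends where the next starts, $+$ denotes concatenation and $a\,c$ means the cycle $c$ traversed $a$ times. Construction: $G_0=(V_0,E_0)$ with $V_0=\{v_{0,0}\}$, $E_0=\{e_{0,0}\}$, $e_{0,0}=(v_{0,0},v_{0,0})$. For $n\geq1$, $G_n=(V_n,E_n)$ consists of a vertex $v_{n,0}$, the loop $e_{n,0}=(v_{n,0},v_{n,0})$, and $n$ cycles $c_{n,1},\dots,c_{n,n}$, each starting and ending at $v_{n,0}$, whose vertices other than $v_{n,0}$ are pairwise distinct (within each cycle and across cycles); $V_n$ is the set of all these vertices and $E_n$ consists of $e_{n,0}$ and the edges of the cycles. The maps $\varphi_n\colon V_{n+1}\to V_n$ and the lengths of the cycles $c_{n+1,i}$ are defined together: $\varphi_n(v_{n+1,0})=v_{n,0}$, and for each $i$ a path $P_{n,i}$ in $G_n$ from $v_{n,0}$ to $v_{n,0}$ is given; $c_{n+1,i}$ has length $|P_{n,i}|$ and $\varphi_n$ maps its $j$-th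 vertex to the $j$-th vertex of $P_{n,i}$ (written $\varphi_n(c_{n+1,i})=P_{n,i}$). The paths are: $P_{0,1}=10\,e_{0,0}$; for $n\geq1$: $P_{n,i}=e_{n,0}+2c_{n,i}+2c_{n,i+1}+\dots+2c_{n,n}+e_{n,0}$ for $2\leq i\leq n$; $P_{n,n+1}=(n+2)^2\big(\sum_{i=1}^n|c_{n,i}|\big)\,e_{n,0}$; and $P_{n,1}=(1\,e_{n,0}+2c_{n,1})+(2\,e_{n,0}+2c_{n,1})+\dots+(k_n\,e_{n,0}+2c_{n,1})+e_{n,0}+2c_{n,2}+\dots+2c_{n,n}+e_{n,0}$, where $k_n=2\big(1+\sum_{i=1}^n|c_{n,i}|\big)$. Let $X=\{x\in\prod_{n\geq0}V_n:\varphi_n(x_{n+1})=x_n\ \forall n\}$ with metric $d(x,y)=2^{-\min\{i:x_i\neq y_i\}}$ ($d(x,x)=0$); $X$ is a compact zero-dimensional metric space, and $T\colon X\to X$ defined by $T(x)=y$ iff $(x_n,y_n)\in E_n$ for all $n$ is a well-defined homeomorphism. Write $x_n$ for the $n$-th coordinate of $x$. Degree: for $v\in V_n$, $\deg(v)=+\infty$ if $v=v_{n,0}$ and $\deg(v)=i$ if $v$ is a vertex of $c_{n,i}$ different from $v_{n,0}$; for $x\in X$, $\deg(x)=\min_n\deg(x_n)$. *)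

theory Defs
  imports Complex_Main "HOL-Library.Extended_Nat"
begin

text \<open>Vertices of G_n are pairs of naturals: (0,0) is v_{n,0}; (i,j) with 1 \<le> i \<le> n and
  1 \<le> j < |c_{n,i}| is the j-th vertex of the cycle c_{n,i}.  Paths are vertex lists.\<close>

type_synonym vert = "nat \<times> nat"

definition loop :: "vert list" where "loop = [(0,0),(0,0)]"

definition pcat :: "vert list \<Rightarrow> vert list \<Rightarrow> vert list" where
  "pcat p q = p @ tl q"

fun rep :: "nat \<Rightarrow> vert list \<Rightarrow> vert list" where
  "rep 0 c = [hd c]"
| "rep (Suc a) c = pcat c (rep a c)"

definition ccat :: "vert list list \<Rightarrow> vert list" where
  "ccat ps = foldr pcat ps [(0,0)]"

text \<open>The cycle c_{n,i}, given the length function L of the cycles of G_n.\<close>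
definition cycL :: "(nat \<Rightarrow> nat) \<Rightarrow> nat \<Rightarrow> vert list" where
  "cycL L i = (0,0) # map (\<lambda>j. (i,j)) [1..<L i] @ [(0,0)]"

definition Ppath :: "nat \<Rightarrow> (nat \<Rightarrow> nat) \<Rightarrow> nat \<Rightarrow> vert list" where
  "Ppath n L i =
     (let S = (\<Sum>k\<in>{1..n}. L k); kn = 2 * (1 + S) in
      if n = 0 then (if i = 1 then rep 10 loop else [])
      else if i = 1 then
        ccat (map (\<lambda>a. pcat (rep a loop) (rep 2 (cycL L 1))) [1..<kn+1]
              @ [loop] @ map (\<lambda>k. rep 2 (cycL L k)) [2..<n+1] @ [loop])
      else if 2 \<le> i \<and> i \<le> n then
        ccat ([loop] @ map (\<lambda>k. rep 2 (cycL L k)) [i..<n+1] @ [loop])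
      else if i = n + 1 then rep ((n+2)^2 * S) loop
      else [])"

text \<open>clen n i = |c_{n,i}|.\<close>
primrec clen :: "nat \<Rightarrow> nat \<Rightarrow> nat" where
  "clen 0 i = 0"
| "clen (Suc n) i = length (Ppath n (clen n) i) - 1"

definition V :: "nat \<Rightarrow> vert set" where
  "V n = {(0,0)} \<union> {(i,j). 1 \<le> i \<and> i \<le> n \<and> 1 \<le> j \<and> j < clen n i}"

definition path_edges :: "vert list \<Rightarrow> (vert \<times> vert) set" where
  "path_edges xs = set (zip xs (tl xs))"

definition E :: "nat \<Rightarrow> (vert \<times> vert) set" where
  "E n = {((0,0),(0,0))} \<union> (\<Union>i\<in>{1..n}. path_edges (cycL (clen n) i))"

definition phi :: "nat \<Rightarrow> vert \<Rightarrow> vert" where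
  "phi n v = (if v = (0,0) then (0,0) else Ppath n (clen n) (fst v) ! snd v)"

definition X :: "(nat \<Rightarrow> vert) set" where
  "X = {x. \<forall>n. x n \<in> V n \<and> phi n (x (Suc n)) = x n}"

definition dist_X :: "(nat \<Rightarrow> vert) \<Rightarrow> (nat \<Rightarrow> vert) \<Rightarrow> real" where
  "dist_X x y = (if x = y then 0 else (1/2) ^ (LEAST i. x i \<noteq> y i))"

definition T :: "(nat \<Rightarrow> vert) \<Rightarrow> (nat \<Rightarrow> vert)" where
  "T x = (THE y. y \<in> X \<and> (\<forall>n. (x n, y n) \<in> E n))"

definition asymptotic :: "(nat \<Rightarrow> vert) \<Rightarrow> (nat \<Rightarrow> vert) \<Rightarrow> bool" where
  "asymptotic x y \<longleftrightarrow> (\<lambda>k. dist_X ((T ^^ k) x) ((T ^^ k) y)) \<longlonglongrightarrow> 0"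

definition degv :: "vert \<Rightarrow> enat" where
  "degv v = (if v = (0,0) then \<infinity> else enat (fst v))"

definition deg :: "(nat \<Rightarrow> vert) \<Rightarrow> enat" where
  "deg x = (INF n. degv (x n))"

definition p_pt :: "nat \<Rightarrow> vert" where "p_pt = (\<lambda>n. (0,0))"

end

theory Submission
  imports Defs
begin

definition Vs :: "nat \<Rightarrow> nat set \<Rightarrow> vert set" where
  "Vs n I = {(0,0)} \<union> {(k,t). k \<in> I \<and> 1 \<le> t \<and> t < clen n k}"

definition good :: "nat \<Rightarrow> nat set \<Rightarrow> vert list \<Rightarrow> bool" where
  "good n I p \<longleftrightarrow> p \<noteq> [] \<and> hd p = (0,0) \<and> last p = (0,0) \<and> set p \<subseteq> Vs n I \<and> path_edges p \<subseteq> E n"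

lemma path_edges_Cons:
  "path_edges (x # xs) = (if xs = [] then {} else insert (x, hd xs) (path_edges xs))"
  by (cases xs) (auto simp: path_edges_def)

lemma path_edges_pcat:
  "p \<noteq> [] \<Longrightarrow> q \<noteq> [] \<Longrightarrow> last p = hd q \<Longrightarrow> path_edges (p @ tl q) \<subseteq> path_edges p \<union> path_edges q"
proof (induction p)
  case Nil then show ?case by simp
next
  case (Cons a p)
  show ?case
  proof (cases "p = []")
    case True
    then have "[a] @ tl q = q" using Cons by (cases q) auto
    then show ?thesis using True by simp
  next
    case False
    then show ?thesis using Cons by (auto simp: path_edges_Cons)
  qed
qed

lemma good_pcat: "good n I p \<Longrightarrow> good n I q \<Longrightarrow> good n I (pcat p q)"
  unfolding good_def pcat_def
  apply (intro conjI)
  apply simp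
  apply simp
  apply (cases "tl q = []"; simp add: last_tl)
  apply (auto dest: list.set_sel(2))[1]
  using path_edges_pcat[of p q] by auto

lemma good_rep: "good n I c \<Longrightarrow> good n I (rep a c)"
proof (induction a)
  case 0 then show ?case by (auto simp: good_def path_edges_def Vs_def)
next
  case (Suc a) then show ?case by (simp add: good_pcat)
qed

lemma ccat_Nil[simp]: "ccat [] = [(0,0)]" by (simp add: ccat_def)
lemma ccat_Cons[simp]: "ccat (p # ps) = pcat p (ccat ps)" by (simp add: ccat_def)

lemma good_ccat: "\<forall>p\<in>set ps. good n I p \<Longrightarrow> good n I (ccat ps)"
proof (induction ps)
  case Nil then show ?case by (auto simp: good_def path_edges_def Vs_def)
next
  case (Cons p ps) then show ?case by (simp add: good_pcat)
qed

lemma good_loop: "good n I loop"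
  by (auto simp: good_def loop_def path_edges_def Vs_def E_def)

lemma good_cyc: "k \<in> I \<Longrightarrow> 1 \<le> k \<Longrightarrow> k \<le> n \<Longrightarrow> good n I (cycL (clen n) k)"
proof -
  assume a: "k \<in> I" "1 \<le> k" "k \<le> n"
  have "path_edges (cycL (clen n) k) \<subseteq> E n" using a by (auto simp: E_def)
  then show ?thesis using a unfolding good_def by (auto simp: Vs_def cycL_def)
qed

lemma good_mono: "good n I p \<Longrightarrow> I \<subseteq> J \<Longrightarrow> good n J p"
  by (auto simp: good_def Vs_def)

lemma rep_loop: "rep a loop = replicate (Suc a) (0,0)"
  by (induction a) (auto simp: loop_def pcat_def)

lemma rep2: "c \<noteq> [] \<Longrightarrow> rep 2 c = c @ tl c"
  by (simp add: numeral_2_eq_2 pcat_def)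

lemma ccat_append: "ccat (ps @ qs) = foldr pcat ps (ccat qs)"
  by (simp add: ccat_def)

lemma dec:
  "ps \<noteq> [] \<Longrightarrow> \<forall>p\<in>set ps. p \<noteq> [] \<and> last p = (0,0) \<Longrightarrow>
   \<exists>U. U \<noteq> [] \<and> last U = (0,0) \<and> foldr pcat ps R = U @ tl R"
proof (induction ps)
  case Nil then show ?case by simp
next
  case (Cons p ps)
  show ?case
  proof (cases "ps = []")
    case True
    have "foldr pcat (p # ps) R = p @ tl R" using True by (simp add: pcat_def)
    then show ?thesis using Cons.prems(2) by (intro exI[of _ p]) simp
  next
    case False
    then obtain U where U: "U \<noteq> []" "last U = (0,0)" "foldr pcat ps R = U @ tl R"
      using Cons.IH[OF False] Cons.prems(2) by (meson list.set_intros(2))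
    have "foldr pcat (p # ps) R = (p @ tl U) @ tl R" using U by (simp add: pcat_def)
    moreover have "last (p @ tl U) = (0,0)" using U Cons.prems
      by (cases "tl U = []") (auto simp: last_tl)
    moreover have "p @ tl U \<noteq> []" using Cons.prems(2) by simp
    ultimately show ?thesis by blast
  qed
qed

lemma Ppath_0: "Ppath 0 L 1 = rep 10 loop" "Ppath 0 L (Suc 0) = rep 10 loop"
  by (simp_all add: Ppath_def Let_def)

lemma Ppath_1: "1 \<le> n \<Longrightarrow> Ppath n L 1 =
   ccat (map (\<lambda>a. pcat (rep a loop) (rep 2 (cycL L 1))) [1..<2*(1+(\<Sum>k\<in>{1..n}. L k))+1]
         @ [loop] @ map (\<lambda>k. rep 2 (cycL L k)) [2..<n+1] @ [loop])"
  by (simp add: Ppath_def Let_def)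

lemma Ppath_mid: "2 \<le> i \<Longrightarrow> i \<le> n \<Longrightarrow> Ppath n L i =
   ccat ([loop] @ map (\<lambda>k. rep 2 (cycL L k)) [i..<n+1] @ [loop])"
  by (simp add: Ppath_def Let_def)

lemma Ppath_last: "1 \<le> n \<Longrightarrow> Ppath n L (n+1) = rep ((n+2)^2 * (\<Sum>k\<in>{1..n}. L k)) loop"
  by (simp add: Ppath_def Let_def)

lemma tl_cyc: "tl (cycL L i) = map (\<lambda>j. (i,j)) [1..<L i] @ [(0,0)]"
  by (simp add: cycL_def)

lemma P3:
  assumes "1 \<le> i" "i \<le> n"
  shows "\<exists>R. Ppath n L i = [(0,0),(0,0)] @ map (\<lambda>j. (i,j)) [1..<L i] @ [(0,0)] @ R \<and> R \<noteq> []"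
proof (cases "i = 1")
  case True
  define kn where "kn = 2*(1+(\<Sum>k\<in>{1..n}. L k))"
  have "1 < kn+1" unfolding kn_def by simp
  then have up: "[1..<kn+1] = 1 # [2..<kn+1]" using upt_conv_Cons[of 1 "kn+1"] by (simp add: numeral_2_eq_2)
  define rest where "rest = map (\<lambda>a. pcat (rep a loop) (rep 2 (cycL L 1))) [2..<kn+1]
         @ [loop] @ map (\<lambda>k. rep 2 (cycL L k)) [2..<n+1] @ [loop]"
  have "Ppath n L 1 = ccat (pcat (rep 1 loop) (rep 2 (cycL L 1)) # rest)"
    using assms True unfolding Ppath_1[OF assms(2)[unfolded True]] kn_def[symmetric] up rest_def by simp
  also have "\<dots> = [(0,0),(0,0)] @ map (\<lambda>j. (1,j)) [1..<L 1] @ [(0,0)] @ (tl (cycL L 1) @ tl (ccat rest))"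
    by (simp add: rep2 cycL_def pcat_def loop_def)
  finally show ?thesis using True by (auto simp: tl_cyc)
next
  case False
  then have "2 \<le> i" using assms by simp
  define rest where "rest = map (\<lambda>k. rep 2 (cycL L k)) [Suc i..<n+1] @ [loop]"
  have up: "[i..<n+1] = i # [Suc i..<n+1]" using assms by (simp add: upt_conv_Cons)
  have "Ppath n L i = ccat (loop # rep 2 (cycL L i) # rest)"
    unfolding Ppath_mid[OF \<open>2 \<le> i\<close> assms(2)] up rest_def by simp
  also have "\<dots> = [(0,0),(0,0)] @ map (\<lambda>j. (i,j)) [1..<L i] @ [(0,0)] @ (tl (cycL L i) @ tl (ccat rest))"
    by (simp add: rep2 cycL_def pcat_def loop_def)
  finally show ?thesis by (auto simp: tl_cyc)
qed

lemma clen_Suc: "clen (Suc n) i = length (Ppath n (clen n) i) - 1" by simp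

lemma CB: "1 \<le> i \<Longrightarrow> i \<le> n \<Longrightarrow> n + 2 \<le> clen n i + i"
proof (induction n arbitrary: i)
  case 0 then show ?case by simp
next
  case (Suc n)
  show ?case
  proof (cases "i \<le> n")
    case True
    obtain R where R: "Ppath n (clen n) i = [(0,0),(0,0)] @ map (\<lambda>j. (i,j)) [1..<clen n i] @ [(0,0)] @ R" "R \<noteq> []"
      using P3[OF Suc.prems(1) True] by blast
    have "n + 2 \<le> clen n i + i" using Suc.IH[OF Suc.prems(1) True] .
    moreover have "clen (Suc n) i = 2 + (clen n i - 1) + length R"
      unfolding clen_Suc R(1) by simp
    ultimately show ?thesis using R(2) by (cases R) auto
  next
    case False
    then have i: "i = Suc n" using Suc.prems by simp
    show ?thesis
    proof (cases "n = 0")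
      case True then show ?thesis using i by (simp add: Ppath_0 rep_loop)
    next
      case False
      then have n1: "1 \<le> n" by simp
      have "n + 2 \<le> clen n 1 + 1" using Suc.IH[of 1] n1 by simp
      moreover have "clen n 1 \<le> (\<Sum>k\<in>{1..n}. clen n k)"
        using n1 by (intro member_le_sum) auto
      ultimately have S: "1 \<le> (\<Sum>k\<in>{1..n}. clen n k)" by simp
      have "clen (Suc n) i = (n+2)^2 * (\<Sum>k\<in>{1..n}. clen n k)"
        using i Ppath_last[OF n1, of "clen n"] by (simp add: rep_loop)
      moreover have "4 \<le> (n+2)^2" by (simp add: power2_eq_square)
      ultimately have "4 \<le> clen (Suc n) i" using S
        by (metis dual_order.trans mult.right_neutral mult_le_mono2)
      then show ?thesis using i by simp
    qed
  qed
qed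

lemma clen_pos: "1 \<le> i \<Longrightarrow> i \<le> n \<Longrightarrow> 2 \<le> clen n i"
  using CB[of i n] by simp

lemma P1: "1 \<le> i \<Longrightarrow> i \<le> n + 1 \<Longrightarrow> good n {i..n} (Ppath n (clen n) i)"
proof -
  assume a: "1 \<le> i" "i \<le> n + 1"
  consider "n = 0" | "n \<ge> 1" "i = 1" | "2 \<le> i" "i \<le> n" | "n \<ge> 1" "i = n + 1" using a by linarith
  then show ?thesis
  proof cases
    case 1 then have "i = 1" using a by simp
    then show ?thesis using 1 by (simp add: Ppath_0 good_rep good_loop)
  next
    case 2
    have c1: "good n {1..n} (cycL (clen n) 1)" using 2 by (intro good_cyc) auto
    show ?thesis unfolding 2(2) Ppath_1[OF 2(1)]
      apply (rule good_ccat)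
      using c1 by (auto intro!: good_pcat good_rep good_loop good_cyc)
  next
    case 3
    show ?thesis unfolding Ppath_mid[OF 3]
      apply (rule good_ccat)
      using 3 by (auto intro!: good_rep good_loop good_cyc)
  next
    case 4
    show ?thesis unfolding 4(2) Ppath_last[OF 4(1)] by (simp add: good_rep good_loop)
  qed
qed

abbreviation Pp :: "nat \<Rightarrow> nat \<Rightarrow> vert list" where "Pp n i \<equiv> Ppath n (clen n) i"

lemma Pgood: "1 \<le> i \<Longrightarrow> i \<le> Suc n \<Longrightarrow> good n {i..n} (Pp n i)"
  using P1 by simp

lemma P_ne: "1 \<le> i \<Longrightarrow> i \<le> Suc n \<Longrightarrow> Pp n i \<noteq> []"
  using Pgood by (simp add: good_def)

lemma P_set: "1 \<le> i \<Longrightarrow> i \<le> Suc n \<Longrightarrow> j < length (Pp n i) \<Longrightarrow> Pp n i ! j \<in> Vs n {i..n}"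
  using Pgood[of i n] nth_mem[of j "Pp n i"] by (auto simp: good_def)

lemma P_lastnth: "1 \<le> i \<Longrightarrow> i \<le> Suc n \<Longrightarrow> Pp n i ! (length (Pp n i) - 1) = (0,0)"
  using Pgood[of i n] by (auto simp: good_def last_conv_nth)

lemma path_edges_nth: "Suc j < length xs \<Longrightarrow> (xs ! j, xs ! Suc j) \<in> path_edges xs"
  unfolding path_edges_def set_zip by (auto simp: nth_tl intro!: exI[of _ j])

lemma path_edges_nth_iff: "path_edges xs = {(xs ! j, xs ! Suc j) | j. Suc j < length xs}"
  unfolding path_edges_def set_zip by (auto simp: nth_tl)

lemma P_edge: "1 \<le> i \<Longrightarrow> i \<le> Suc n \<Longrightarrow> Suc j < length (Pp n i) \<Longrightarrow> (Pp n i ! j, Pp n i ! Suc j) \<in> E n"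
  using Pgood[of i n] path_edges_nth[of j "Pp n i"] by (auto simp: good_def)

lemma Vs_empty: "Vs n {} = {(0,0)}" by (simp add: Vs_def)

lemma Vs_V: "I \<subseteq> {1..n} \<Longrightarrow> Vs n I \<subseteq> V n"
  by (auto simp: Vs_def V_def)

lemma V_Vs: "V n = Vs n {1..n}"
  by (auto simp: Vs_def V_def)

lemma last_ccat_loop:
  assumes "ps \<noteq> []" "\<forall>p\<in>set ps. good n I p"
  shows "ccat (ps @ [loop]) ! (length (ccat (ps @ [loop])) - 2) = (0,0)"
proof -
  have "\<forall>p\<in>set ps. p \<noteq> [] \<and> last p = (0,0)" using assms(2) by (auto simp: good_def)
  then obtain U where U: "U \<noteq> []" "last U = (0,0)" "foldr pcat ps loop = U @ tl loop"
    using dec[OF assms(1)] by blast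
  have "ccat [loop] = loop" by (simp add: pcat_def loop_def)
  then have "ccat (ps @ [loop]) = U @ [(0,0)]" using U(3) by (simp add: ccat_append loop_def)
  then show ?thesis using U(1,2) by (simp add: last_conv_nth nth_append)
qed

lemma P_pen: "1 \<le> i \<Longrightarrow> i \<le> Suc n \<Longrightarrow> 2 \<le> length (Pp n i) \<Longrightarrow> Pp n i ! (length (Pp n i) - 2) = (0,0)"
proof -
  assume a: "1 \<le> i" "i \<le> Suc n" "2 \<le> length (Pp n i)"
  consider "i = Suc n" | "n \<ge> 1" "i = 1" | "2 \<le> i" "i \<le> n" using a by linarith
  then show ?thesis
  proof cases
    case 1
    have "Pp n i ! (length (Pp n i) - 2) \<in> Vs n {i..n}" using a by (intro P_set) auto
    then show ?thesis using 1 by (simp add: Vs_def)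
  next
    case 2
    have c1: "good n {1..n} (cycL (clen n) 1)" using 2 by (intro good_cyc) auto
    have eq: "Pp n i = ccat ((map (\<lambda>a. pcat (rep a loop) (rep 2 (cycL (clen n) 1))) [1..<2*(1+(\<Sum>k\<in>{1..n}. clen n k))+1]
         @ [loop] @ map (\<lambda>k. rep 2 (cycL (clen n) k)) [2..<n+1]) @ [loop])"
      unfolding 2(2) Ppath_1[OF 2(1)] by simp
    show ?thesis unfolding eq
      apply (rule last_ccat_loop[where I="{1..n}"])
      using c1 by (auto intro!: good_pcat good_rep good_loop good_cyc)
  next
    case 3
    have eq: "Pp n i = ccat (([loop] @ map (\<lambda>k. rep 2 (cycL (clen n) k)) [i..<n+1]) @ [loop])"
      unfolding Ppath_mid[OF 3] by simp
    show ?thesis unfolding eq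
      apply (rule last_ccat_loop[where I="{i..n}"])
      using 3 by (auto intro!: good_rep good_loop good_cyc)
  qed
qed

lemma P_one: "1 \<le> i \<Longrightarrow> i \<le> Suc n \<Longrightarrow> 2 \<le> length (Pp n i) \<Longrightarrow> Pp n i ! 1 = (0,0)"
proof -
  assume a: "1 \<le> i" "i \<le> Suc n" "2 \<le> length (Pp n i)"
  show ?thesis
  proof (cases "i = Suc n")
    case True
    have "Pp n i ! 1 \<in> Vs n {i..n}" using a by (intro P_set) auto
    then show ?thesis using True by (simp add: Vs_def)
  next
    case False
    then obtain R where "Pp n i = [(0,0),(0,0)] @ map (\<lambda>j. (i,j)) [1..<clen n i] @ [(0,0)] @ R"
      using P3[of i n "clen n"] a by auto
    then show ?thesis by simp
  qed
qed

lemma P_mid: "1 \<le> i \<Longrightarrow> i \<le> n \<Longrightarrow> 1 \<le> t \<Longrightarrow> t < clen n i \<Longrightarrow> Pp n i ! Suc t = (i,t)"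
proof -
  assume a: "1 \<le> i" "i \<le> n" "1 \<le> t" "t < clen n i"
  obtain R where "Pp n i = [(0,0),(0,0)] @ map (\<lambda>j. (i,j)) [1..<clen n i] @ [(0,0)] @ R"
    using P3[of i n "clen n"] a by auto
  then show ?thesis using a by (simp add: nth_append)
qed

definition nxt :: "nat \<Rightarrow> vert \<Rightarrow> vert" where
  "nxt n v = (if v = (0,0) then (0,0) else if Suc (snd v) < clen n (fst v) then (fst v, Suc (snd v)) else (0,0))"

lemma cyc_len: "1 \<le> L k \<Longrightarrow> length (cycL L k) = Suc (L k)"
  by (simp add: cycL_def)

lemma cyc_nth: "1 \<le> L k \<Longrightarrow> t \<le> L k \<Longrightarrow> cycL L k ! t = (if 0 < t \<and> t < L k then (k,t) else (0,0))"
  by (cases t) (auto simp: cycL_def nth_append)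

lemma E_cases:
  assumes "(u,w) \<in> E n"
  shows "(u = (0,0) \<and> w = (0,0)) \<or> (\<exists>k t. 1 \<le> k \<and> k \<le> n \<and> t < clen n k \<and>
            u = (if 0 < t \<and> t < clen n k then (k,t) else (0,0)) \<and>
            w = (if 0 < Suc t \<and> Suc t < clen n k then (k,Suc t) else (0,0)))"
proof -
  { assume "(u,w) \<noteq> ((0,0),(0,0))"
    then obtain k where k: "k \<in> {1..n}" "(u,w) \<in> path_edges (cycL (clen n) k)"
      using assms by (auto simp: E_def)
    have L: "1 \<le> clen n k" using clen_pos[of k n] k by auto
    obtain t where t: "Suc t < length (cycL (clen n) k)" "u = cycL (clen n) k ! t" "w = cycL (clen n) k ! Suc t"
      using k(2) unfolding path_edges_nth_iff by auto
    have "t < clen n k" using t(1) cyc_len[of "clen n" k, OF L] by simp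
    then have ?thesis using t cyc_nth[of "clen n" k t, OF L] cyc_nth[of "clen n" k "Suc t", OF L] k(1) by (intro disjI2 exI[of _ k] exI[of _ t]) auto }
  then show ?thesis by blast
qed

lemma E1: "v \<noteq> (0,0) \<Longrightarrow> (v,w) \<in> E n \<Longrightarrow> w = nxt n v"
  using E_cases[of v w n] by (auto simp: nxt_def split: if_splits)

lemma E0: "((0,0),w) \<in> E n \<Longrightarrow> w = (0,0) \<or> (\<exists>k. w = (k,1))"
  using E_cases[of "(0,0)" w n] by (auto split: if_splits)

lemma E2: "v \<in> V n \<Longrightarrow> v \<noteq> (0,0) \<Longrightarrow> (v, nxt n v) \<in> E n"
proof -
  assume a: "v \<in> V n" "v \<noteq> (0,0)"
  obtain k t where v: "v = (k,t)" "1 \<le> k" "k \<le> n" "1 \<le> t" "t < clen n k" using a by (auto simp: V_def)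
  have L: "1 \<le> clen n k" using v by simp
  have "(cycL (clen n) k ! t, cycL (clen n) k ! Suc t) \<in> path_edges (cycL (clen n) k)"
    using v cyc_len[of "clen n" k, OF L] by (intro path_edges_nth) simp
  then have "(cycL (clen n) k ! t, cycL (clen n) k ! Suc t) \<in> E n" using v by (auto simp: E_def)
  then show ?thesis using v cyc_nth[of "clen n" k t, OF L] cyc_nth[of "clen n" k "Suc t", OF L]
    by (cases "Suc t < clen n k") (auto simp: nxt_def)
qed

lemma nxt_V: "v \<in> V n \<Longrightarrow> nxt n v \<in> V n"
  by (auto simp: nxt_def V_def)

lemma V_nz: "v \<in> V n \<Longrightarrow> v \<noteq> (0,0) \<Longrightarrow> 1 \<le> fst v \<and> fst v \<le> n \<and> 1 \<le> snd v \<and> snd v < clen n (fst v)"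
  by (auto simp: V_def)

lemma V_Suc_len: "v \<in> V (Suc n) \<Longrightarrow> v \<noteq> (0,0) \<Longrightarrow> Suc (snd v) < length (Pp n (fst v))"
  using V_nz[of v "Suc n"] by auto

lemma phi_V: "v \<in> V (Suc n) \<Longrightarrow> phi n v \<in> V n"
proof (cases "v = (0,0)")
  case True then show ?thesis by (simp add: phi_def V_def)
next
  case False
  assume v: "v \<in> V (Suc n)"
  have f: "1 \<le> fst v" "fst v \<le> Suc n" using V_nz[OF v False] by auto
  have "phi n v \<in> Vs n {fst v..n}" proof -
    have "phi n v = Pp n (fst v) ! snd v" using False by (simp add: phi_def)
    then show ?thesis using f V_Suc_len[OF v False] by (auto intro!: P_set)
  qed
  then show ?thesis using Vs_V[of "{fst v..n}" n] f by auto
qed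

lemma phi_nz_fst: "v \<in> V (Suc n) \<Longrightarrow> phi n v \<noteq> (0,0) \<Longrightarrow> v \<noteq> (0,0) \<and> fst v \<le> fst (phi n v)"
proof -
  assume v: "v \<in> V (Suc n)" and p: "phi n v \<noteq> (0,0)"
  then have nz: "v \<noteq> (0,0)" by (auto simp: phi_def)
  have f: "1 \<le> fst v" "fst v \<le> Suc n" using V_nz[OF v nz] by auto
  have "phi n v \<in> Vs n {fst v..n}" proof -
    have "phi n v = Pp n (fst v) ! snd v" using nz by (simp add: phi_def)
    then show ?thesis using f V_Suc_len[OF v nz] by (auto intro!: P_set)
  qed
  then show ?thesis using p nz by (auto simp: Vs_def)
qed

lemma EP: "a \<in> V (Suc n) \<Longrightarrow> b \<in> V (Suc n) \<Longrightarrow> (a,b) \<in> E (Suc n) \<Longrightarrow> (phi n a, phi n b) \<in> E n"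
proof (cases "a = (0,0)")
  case True
  assume ab: "a \<in> V (Suc n)" "b \<in> V (Suc n)" "(a,b) \<in> E (Suc n)"
  show ?thesis
  proof (cases "b = (0,0)")
    case True then show ?thesis using \<open>a = (0,0)\<close> by (simp add: phi_def E_def)
  next
    case False
    then obtain k where b: "b = (k,1)" using E0 ab True by blast
    have f: "1 \<le> k" "k \<le> Suc n" "Suc 1 < length (Pp n k)" using V_nz[OF ab(2) False] V_Suc_len[OF ab(2) False] b by auto
    have "(Pp n k ! 0, Pp n k ! Suc 0) \<in> E n" using f by (intro P_edge) auto
    moreover have "Pp n k ! 0 = (0,0)" using Pgood[of k n] f by (auto simp: good_def hd_conv_nth)
    ultimately show ?thesis using True b by (simp add: phi_def)
  qed
next
  case False
  assume ab: "a \<in> V (Suc n)" "b \<in> V (Suc n)" "(a,b) \<in> E (Suc n)"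
  obtain i j where a: "a = (i,j)" by (cases a)
  have f: "1 \<le> i" "i \<le> Suc n" "1 \<le> j" "j < clen (Suc n) i" using V_nz[OF ab(1) False] a by auto
  have b: "b = nxt (Suc n) a" using E1 False ab(3) by blast
  have pb: "phi n b = Pp n i ! Suc j"
  proof (cases "Suc j < clen (Suc n) i")
    case True then show ?thesis using b a f by (simp add: nxt_def phi_def)
  next
    case F: False
    then have "Suc j = length (Pp n i) - 1" using f by simp
    then show ?thesis using b a F P_lastnth[OF f(1,2)] by (simp add: nxt_def phi_def)
  qed
  have "(Pp n i ! j, Pp n i ! Suc j) \<in> E n" using f by (intro P_edge) auto
  then show ?thesis using pb a f by (simp add: phi_def)
qed

fun Phi :: "nat \<Rightarrow> nat \<Rightarrow> vert \<Rightarrow> vert" where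
  "Phi n 0 v = v"
| "Phi n (Suc k) v = phi n (Phi (Suc n) k v)"

lemma X_Phi: "x \<in> X \<Longrightarrow> x n = Phi n k (x (n+k))"
proof (induction k arbitrary: n)
  case 0 then show ?case by simp
next
  case (Suc k)
  have "Phi n (Suc k) (x (n + Suc k)) = phi n (Phi (Suc n) k (x (Suc n + k)))" by simp
  also have "\<dots> = phi n (x (Suc n))" using Suc.IH[of "Suc n"] Suc.prems by simp
  also have "\<dots> = x n" using Suc.prems by (simp add: X_def)
  finally show ?case by simp
qed

lemma Phi_VE: "a \<in> V (n+k) \<Longrightarrow> b \<in> V (n+k) \<Longrightarrow> (a,b) \<in> E (n+k) \<Longrightarrow>
  Phi n k a \<in> V n \<and> Phi n k b \<in> V n \<and> (Phi n k a, Phi n k b) \<in> E n"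
proof (induction k arbitrary: n)
  case 0 then show ?case by simp
next
  case (Suc k)
  have "Phi (Suc n) k a \<in> V (Suc n) \<and> Phi (Suc n) k b \<in> V (Suc n) \<and> (Phi (Suc n) k a, Phi (Suc n) k b) \<in> E (Suc n)"
    using Suc.IH[of "Suc n"] Suc.prems by simp
  then show ?case using phi_V EP by simp
qed

lemma X_V: "x \<in> X \<Longrightarrow> x n \<in> V n" by (simp add: X_def)
lemma X_phi: "x \<in> X \<Longrightarrow> phi n (x (Suc n)) = x n" by (simp add: X_def)

lemma X_nz_Suc: "x \<in> X \<Longrightarrow> x n \<noteq> (0,0) \<Longrightarrow> x (Suc n) \<noteq> (0,0)"
  using X_phi[of x n] by (auto simp: phi_def)

lemma X_nz_up: assumes "x \<in> X" "x m \<noteq> (0,0)" "m \<le> n" shows "x n \<noteq> (0,0)"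
  using assms(3)
proof (induction n rule: dec_induct)
  case base then show ?case using assms(2) by simp
next
  case (step k) then show ?case using X_nz_Suc[OF assms(1)] by blast
qed

lemma K: "x \<in> X \<Longrightarrow> x n \<noteq> (0,0) \<Longrightarrow> phi n (nxt (Suc n) (x (Suc n))) = nxt n (x n)"
proof -
  assume x: "x \<in> X" "x n \<noteq> (0,0)"
  have nz: "x (Suc n) \<noteq> (0,0)" using X_nz_Suc x by blast
  have "(phi n (x (Suc n)), phi n (nxt (Suc n) (x (Suc n)))) \<in> E n"
    using EP[OF X_V[OF x(1)] nxt_V[OF X_V[OF x(1)]] E2[OF X_V[OF x(1)] nz]] .
  then show ?thesis using E1 x X_phi by metis
qed

lemma succ_ex: "x \<in> X \<Longrightarrow> \<exists>y. y \<in> X \<and> (\<forall>n. (x n, y n) \<in> E n)"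
proof (cases "\<exists>m. x m \<noteq> (0,0)")
  case False
  assume x: "x \<in> X"
  then show ?thesis using False by (intro exI[of _ x]) (auto simp: E_def)
next
  case True
  assume x: "x \<in> X"
  then obtain m where m: "x m \<noteq> (0,0)" using True by blast
  define w where "w = nxt m (x m)"
  define y where "y n = (if m \<le> n then nxt n (x n) else Phi n (m-n) w)" for n
  have wE: "(x m, w) \<in> E m" "x m \<in> V m" "w \<in> V m"
    unfolding w_def using E2 X_V[OF x] m nxt_V by auto
  have low: "n < m \<Longrightarrow> y n \<in> V n \<and> (x n, y n) \<in> E n" for n
  proof -
    assume "n < m"
    then have e: "n + (m-n) = m" by simp
    have "Phi n (m-n) (x m) \<in> V n \<and> Phi n (m-n) w \<in> V n \<and> (Phi n (m-n) (x m), Phi n (m-n) w) \<in> E n"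
      using Phi_VE[of "x m" n "m-n" w] wE e by simp
    moreover have "x n = Phi n (m-n) (x m)" using X_Phi[OF x, of n "m-n"] e by simp
    ultimately show ?thesis using \<open>n < m\<close> by (simp add: y_def)
  qed
  have "\<forall>n. y n \<in> V n \<and> phi n (y (Suc n)) = y n"
  proof (intro allI conjI)
    fix n
    show "y n \<in> V n"
      using low[of n] nxt_V[OF X_V[OF x]] by (cases "m \<le> n") (auto simp: y_def)
    show "phi n (y (Suc n)) = y n"
    proof (cases "m \<le> n")
      case True
      then show ?thesis using K[OF x X_nz_up[OF x m True]] True by (simp add: y_def)
    next
      case False
      have ys: "y (Suc n) = Phi (Suc n) (m - Suc n) w"
        using False by (cases "m = Suc n") (auto simp: y_def w_def)
      have "m - n = Suc (m - Suc n)" using False by simp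
      then show ?thesis using ys False by (simp add: y_def)
    qed
  qed
  then have "y \<in> X" by (simp add: X_def)
  moreover have "(x n, y n) \<in> E n" for n
  proof (cases "m \<le> n")
    case True
    then have nz: "x n \<noteq> (0,0)" using X_nz_up[OF x m] by blast
    then show ?thesis using E2[OF X_V[OF x] nz] True by (simp add: y_def)
  next
    case False then show ?thesis using low[of n] by simp
  qed
  ultimately show ?thesis by blast
qed

lemma succ_zero: "y \<in> X \<Longrightarrow> \<forall>n. ((0,0), y n) \<in> E n \<Longrightarrow> y n = (0,0)"
proof (rule ccontr)
  assume y: "y \<in> X" "\<forall>n. ((0,0), y n) \<in> E n" and nz: "y n \<noteq> (0,0)"
  have "phi n (y (Suc n)) = (0,0)"
  proof (cases "y (Suc n) = (0,0)")
    case True then show ?thesis by (simp add: phi_def)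
  next
    case False
    then obtain k where k: "y (Suc n) = (k,1)" using E0 y(2) by blast
    have f: "1 \<le> k" "k \<le> Suc n" "Suc 1 < length (Pp n k)"
      using V_nz[OF X_V[OF y(1)] False] V_Suc_len[OF X_V[OF y(1)] False] k by auto
    then show ?thesis using k P_one[of k n] by (simp add: phi_def)
  qed
  then show False using nz X_phi[OF y(1)] by simp
qed

lemma succ_uniq:
  assumes x: "x \<in> X" and y: "y \<in> X" "\<forall>n. (x n, y n) \<in> E n" and z: "z \<in> X" "\<forall>n. (x n, z n) \<in> E n"
  shows "y = z"
proof (cases "\<exists>m. x m \<noteq> (0,0)")
  case False
  then have "\<forall>n. x n = (0,0)" by blast
  then show ?thesis using succ_zero[OF y(1)] succ_zero[OF z(1)] y(2) z(2) by fastforce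
next
  case True
  then obtain m where m: "x m \<noteq> (0,0)" by blast
  have hi: "m \<le> n \<Longrightarrow> y n = z n" for n
  proof -
    assume "m \<le> n"
    then have nz: "x n \<noteq> (0,0)" using X_nz_up[OF x m] by blast
    show ?thesis using E1[OF nz, of "y n" n] E1[OF nz, of "z n" n] y(2) z(2) by simp
  qed
  show ?thesis
  proof
    fix n
    show "y n = z n"
    proof (cases "m \<le> n")
      case True then show ?thesis using hi by simp
    next
      case False
      then have e: "n + (m-n) = m" by simp
      have "y n = Phi n (m-n) (y m)" "z n = Phi n (m-n) (z m)"
        using X_Phi[OF y(1), of n "m-n"] X_Phi[OF z(1), of n "m-n"] e by auto
      then show ?thesis using hi[of m] by simp
    qed
  qed
qed

lemma succ_ex1: "x \<in> X \<Longrightarrow> \<exists>!y. y \<in> X \<and> (\<forall>n. (x n, y n) \<in> E n)"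
  using succ_ex succ_uniq by blast

lemma T_prop: "x \<in> X \<Longrightarrow> T x \<in> X \<and> (\<forall>n. (x n, T x n) \<in> E n)"
  unfolding T_def by (rule theI'[OF succ_ex1])

lemma T_X: "x \<in> X \<Longrightarrow> T x \<in> X" using T_prop by blast

lemma T_nz: "x \<in> X \<Longrightarrow> x n \<noteq> (0,0) \<Longrightarrow> T x n = nxt n (x n)"
  using T_prop E1 by blast

lemma p_X: "p_pt \<in> X" by (simp add: X_def p_pt_def V_def phi_def)

lemma T_p: "T p_pt = p_pt"
proof -
  have "\<forall>n. (p_pt n, p_pt n) \<in> E n" by (simp add: p_pt_def E_def)
  then show ?thesis using succ_uniq[OF p_X p_X _ T_X[OF p_X]] T_prop[OF p_X] p_X by metis
qed

lemma Tk_X: "x \<in> X \<Longrightarrow> (T^^k) x \<in> X"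
  by (induction k) (auto simp: T_X)

lemma Tk_p: "(T^^k) p_pt = p_pt"
  by (induction k) (auto simp: T_p)

lemma P4_gen:
  assumes ps: "ps \<noteq> []" "\<forall>p\<in>set ps. good n I p"
    and rest: "\<forall>q\<in>set rest. good n {Suc d..n} q"
    and d: "Suc d \<le> n" "1 \<le> d" and t: "1 \<le> t" "t < clen n (Suc d)"
  shows "\<exists>U V. ccat (ps @ rep 2 (cycL (clen n) (Suc d)) # rest) = U @ V \<and> (\<forall>v\<in>set V. fst v \<noteq> d) \<and> (Suc d, t) \<in> set V"
proof -
  let ?c = "cycL (clen n) (Suc d)"
  let ?W = "ccat (rep 2 ?c # rest)"
  have "\<forall>p\<in>set ps. p \<noteq> [] \<and> last p = (0,0)" using ps(2) by (auto simp: good_def)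
  then obtain U where U: "foldr pcat ps ?W = U @ tl ?W" using dec[OF ps(1)] by blast
  have gc: "good n {Suc d..n} ?c" using d by (intro good_cyc) auto
  have gW: "good n {Suc d..n} ?W" using rest gc good_rep[OF gc] by (intro good_ccat) auto
  have "\<forall>v\<in>set (tl ?W). fst v \<noteq> d"
  proof
    fix v assume "v \<in> set (tl ?W)"
    then have "v \<in> set ?W" by (cases ?W) auto
    then have "v \<in> Vs n {Suc d..n}" using gW by (auto simp: good_def)
    then show "fst v \<noteq> d" using d(2) by (auto simp: Vs_def)
  qed
  moreover have "(Suc d, t) \<in> set (tl ?W)"
  proof -
    have "?W = (?c @ tl ?c) @ tl (ccat rest)" by (simp add: rep2 cycL_def pcat_def)
    then have "tl ?W = tl ?c @ tl ?c @ tl (ccat rest)" by (simp add: cycL_def)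
    moreover have "(Suc d, t) \<in> set (tl ?c)" using t by (simp add: tl_cyc)
    ultimately show ?thesis by simp
  qed
  moreover have "ccat (ps @ rep 2 ?c # rest) = U @ tl ?W" using U by (simp add: ccat_append)
  ultimately show ?thesis by blast
qed

lemma P4:
  assumes d: "1 \<le> d" "Suc d \<le> n" and t: "1 \<le> t" "t < clen n (Suc d)"
  shows "\<exists>U V. Pp n d = U @ V \<and> (\<forall>v\<in>set V. fst v \<noteq> d) \<and> (Suc d, t) \<in> set V"
proof (cases "d = 1")
  case True
  have n1: "1 \<le> n" using d by simp
  have up: "[2..<n+1] = 2 # [3..<n+1]" using d True by (simp add: upt_conv_Cons)
  define ps where "ps = map (\<lambda>a. pcat (rep a loop) (rep 2 (cycL (clen n) 1))) [1..<2*(1+(\<Sum>k\<in>{1..n}. clen n k))+1] @ [loop]"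
  define rest where "rest = map (\<lambda>k. rep 2 (cycL (clen n) k)) [3..<n+1] @ [loop]"
  have eq: "Pp n d = ccat (ps @ rep 2 (cycL (clen n) 2) # rest)"
    unfolding True Ppath_1[OF n1] ps_def rest_def up by simp
  have c1: "good n {1..n} (cycL (clen n) 1)" using n1 by (intro good_cyc) auto
  have "\<exists>U V. ccat (ps @ rep 2 (cycL (clen n) (Suc 1)) # rest) = U @ V \<and> (\<forall>v\<in>set V. fst v \<noteq> 1) \<and> (Suc 1, t) \<in> set V"
    apply (rule P4_gen[where I="{1..n}"])
    using c1 d t True by (auto simp: ps_def rest_def intro!: good_pcat good_rep good_loop good_cyc)
  then show ?thesis using eq True by (simp add: numeral_2_eq_2)
next
  case False
  then have d2: "2 \<le> d" using d by simp
  have up: "[d..<n+1] = d # Suc d # [Suc (Suc d)..<n+1]" using d by (simp add: upt_conv_Cons)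
  define ps where "ps = [loop, rep 2 (cycL (clen n) d)]"
  define rest where "rest = map (\<lambda>k. rep 2 (cycL (clen n) k)) [Suc (Suc d)..<n+1] @ [loop]"
  have dn: "d \<le> n" using d by simp
  have eq: "Pp n d = ccat (ps @ rep 2 (cycL (clen n) (Suc d)) # rest)"
    unfolding Ppath_mid[OF d2 dn] ps_def rest_def up using d by simp
  have "\<exists>U V. ccat (ps @ rep 2 (cycL (clen n) (Suc d)) # rest) = U @ V \<and> (\<forall>v\<in>set V. fst v \<noteq> d) \<and> (Suc d, t) \<in> set V"
    apply (rule P4_gen[where I="{d..n}"])
    using d t by (auto simp: ps_def rest_def intro!: good_rep good_loop good_cyc)
  then show ?thesis using eq by simp
qed

lemma mono1: "x \<in> X \<Longrightarrow> x n \<noteq> (0,0) \<Longrightarrow> fst (x (Suc n)) \<le> fst (x n)"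
  using phi_nz_fst[OF X_V[of x "Suc n"]] X_phi[of x n] by simp

lemma mono_le: assumes x: "x \<in> X" and nz: "x m \<noteq> (0,0)" and mn: "m \<le> n"
  shows "fst (x n) \<le> fst (x m)"
  using mn
proof (induction n rule: dec_induct)
  case base then show ?case by simp
next
  case (step k)
  then show ?case using mono1[OF x X_nz_up[OF x nz step(1)]] by simp
qed

definition DS :: "(nat \<Rightarrow> vert) \<Rightarrow> nat \<Rightarrow> nat \<Rightarrow> bool" where
  "DS x d N \<longleftrightarrow> (\<forall>n\<ge>N. x n \<noteq> (0,0) \<and> fst (x n) = d)"

lemma DS_ex: assumes x: "x \<in> X" and np: "x \<noteq> p_pt" shows "\<exists>d N. DS x d N"
proof -
  obtain m where m: "x m \<noteq> (0,0)" using np by (auto simp: p_pt_def)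
  define f where "f k = fst (x (m+k))" for k
  define d where "d = (LEAST v. \<exists>k. f k = v)"
  have "\<exists>k. f k = d" unfolding d_def by (rule LeastI_ex) blast
  then obtain k0 where k0: "f k0 = d" by blast
  have "DS x d (m+k0)"
    unfolding DS_def
  proof (intro allI impI conjI)
    fix n assume n: "m + k0 \<le> n"
    show nz: "x n \<noteq> (0,0)" using X_nz_up[OF x m] n by simp
    have "fst (x n) \<le> d" using mono_le[OF x X_nz_up[OF x m, of "m+k0"] n] k0 by (simp add: f_def)
    moreover have "d \<le> f (n - m)" unfolding d_def by (rule Least_le) blast
    ultimately show "fst (x n) = d" using n by (simp add: f_def)
  qed
  then show ?thesis by blast
qed

lemma deg_DS: assumes x: "x \<in> X" and ds: "DS x d N" shows "deg x = enat d"
proof (rule antisym)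
  have "deg x \<le> degv (x N)" unfolding deg_def by (rule INF_lower) simp
  also have "\<dots> = enat d" using ds by (simp add: DS_def degv_def)
  finally show "deg x \<le> enat d" .
next
  show "enat d \<le> deg x" unfolding deg_def
  proof (rule INF_greatest)
    fix n
    show "enat d \<le> degv (x n)"
    proof (cases "x n = (0,0)")
      case True then show ?thesis by (simp add: degv_def)
    next
      case False
      have "fst (x (max n N)) \<le> fst (x n)" using mono_le[OF x False] by simp
      then show ?thesis using ds False by (simp add: DS_def degv_def)
    qed
  qed
qed

lemma DS_low: assumes x: "x \<in> X" and ds: "DS x e N" and n: "n < e" shows "x n = (0,0)"
proof (rule ccontr)
  assume nz: "x n \<noteq> (0,0)"
  have "fst (x (max n N)) \<le> fst (x n)" using mono_le[OF x nz] by simp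
  then have "e \<le> fst (x n)" using ds by (simp add: DS_def)
  moreover have "fst (x n) \<le> n" using V_nz[OF X_V[OF x] nz] by simp
  ultimately show False using n by simp
qed

lemma DS_T: assumes x: "x \<in> X" and ds: "DS x d N" shows "DS (T x) d (Suc N)"
  unfolding DS_def
proof (intro allI impI)
  fix n assume n: "Suc N \<le> n"
  then obtain n' where n': "n = Suc n'" "N \<le> n'" by (cases n) auto
  have nz: "x (Suc n') \<noteq> (0,0)" "fst (x (Suc n')) = d" "x n' \<noteq> (0,0)" using ds n n' by (auto simp: DS_def)
  obtain j where j: "x (Suc n') = (d,j)" using nz(2) by (cases "x (Suc n')") auto
  have f: "1 \<le> d" "d \<le> Suc n'" "Suc j < length (Pp n' d)"
    using V_nz[OF X_V[OF x] nz(1)] V_Suc_len[OF X_V[OF x] nz(1)] j by auto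
  have "Suc j < clen (Suc n') d"
  proof (rule ccontr)
    assume "\<not> Suc j < clen (Suc n') d"
    then have "j = length (Pp n' d) - 2" using f by simp
    then have "Pp n' d ! j = (0,0)" using P_pen[of d n'] f by simp
    moreover have "x n' = Pp n' d ! j" using X_phi[OF x, of n'] j f by (simp add: phi_def)
    ultimately show False using nz(3) by simp
  qed
  then have "T x n = (d, Suc j)" using T_nz[OF x nz(1)] j f n'(1) by (simp add: nxt_def)
  then show "T x n \<noteq> (0,0) \<and> fst (T x n) = d" using f by simp
qed

lemma DS_Tk: "x \<in> X \<Longrightarrow> DS x d N \<Longrightarrow> DS ((T^^k) x) d (N + k)"
  by (induction k) (auto intro: DS_T Tk_X)

lemma IT: assumes x: "x \<in> X" and v: "x m = (i,j)" "1 \<le> i" and jk: "j + k < clen m i"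
  shows "(T^^k) x m = (i, j+k)"
  using jk
proof (induction k)
  case 0 then show ?case using v by simp
next
  case (Suc k)
  then have h: "(T^^k) x m = (i, j+k)" by simp
  have "(T^^Suc k) x m = T ((T^^k) x) m" by simp
  also have "\<dots> = nxt m (i, j+k)" using T_nz[OF Tk_X[OF x], of k m] h v by simp
  also have "\<dots> = (i, j + Suc k)" using Suc.prems v by (simp add: nxt_def)
  finally show ?case .
qed

lemma DESC: assumes z: "z \<in> X" and h: "z (Suc d + s) = (Suc d, Suc s)" shows "z (Suc d) = (Suc d, 1)"
  using h
proof (induction s)
  case 0 then show ?case by simp
next
  case (Suc s)
  let ?m = "Suc d + s"
  have "z ?m = phi ?m (z (Suc ?m))" using X_phi[OF z] by simp
  also have "\<dots> = Pp ?m (Suc d) ! Suc (Suc s)" using Suc.prems by (simp add: phi_def)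
  also have "\<dots> = (Suc d, Suc s)"
  proof (rule P_mid)
    show "Suc s < clen ?m (Suc d)" using CB[of "Suc d" ?m] by simp
  qed auto
  finally show ?case using Suc.IH by simp
qed

lemma lemB: assumes x: "x \<in> X" and ds: "DS x d N" shows "\<exists>k. (T^^k) x (Suc d) \<noteq> (0,0)"
proof -
  have d1: "1 \<le> d" using ds V_nz[OF X_V[OF x], of N] by (auto simp: DS_def)
  define n where "n = N + d + 1"
  have nz: "x (Suc n) \<noteq> (0,0)" "fst (x (Suc n)) = d" "x n \<noteq> (0,0)" "fst (x n) = d"
    using ds by (auto simp: DS_def n_def)
  obtain j where j: "x (Suc n) = (d,j)" using nz(2) by (cases "x (Suc n)") auto
  have jl: "Suc j < length (Pp n d)" using V_Suc_len[OF X_V[OF x] nz(1)] j by simp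
  have xn: "x n = Pp n d ! j" using X_phi[OF x, of n] j d1 by (simp add: phi_def)
  define t where "t = n - d"
  have t: "1 \<le> t" "t < clen n (Suc d)" "n = Suc d + (t - 1)" "t = Suc (t - 1)"
    using CB[of "Suc d" n] unfolding t_def n_def by auto
  obtain U V where UV: "Pp n d = U @ V" "\<forall>v\<in>set V. fst v \<noteq> d" "(Suc d, t) \<in> set V"
    using P4[OF d1 _ t(1,2)] n_def by auto
  have jU: "j < length U"
  proof (rule ccontr)
    assume "\<not> j < length U"
    then have "Pp n d ! j = V ! (j - length U)" "j - length U < length V" using UV(1) jl by (auto simp: nth_append)
    then have "fst (x n) \<noteq> d" using UV(2) xn by (metis nth_mem)
    then show False using nz(4) by simp
  qed
  obtain q where q: "q < length V" "V ! q = (Suc d, t)" using UV(3) by (metis in_set_conv_nth)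
  define j' where "j' = length U + q"
  have pj: "Pp n d ! j' = (Suc d, t)" using q UV(1) by (simp add: j'_def nth_append)
  have "j' < length (Pp n d)" using q UV(1) by (simp add: j'_def)
  moreover have "j' \<noteq> length (Pp n d) - 1" using pj P_lastnth[of d n] d1 n_def by auto
  ultimately have j'l: "j' < clen (Suc n) d" by simp
  have jj: "j < j'" using jU by (simp add: j'_def)
  define z where "z = (T^^(j'-j)) x"
  have zX: "z \<in> X" unfolding z_def by (rule Tk_X[OF x])
  have "z (Suc n) = (d, j')" unfolding z_def using IT[OF x j d1, of "j'-j"] jj j'l by simp
  then have "z n = (Suc d, t)" using X_phi[OF zX, of n] pj d1 by (simp add: phi_def)
  then have "z (Suc d) = (Suc d, 1)" using DESC[OF zX, of d "t-1"] t by simp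
  then show ?thesis unfolding z_def by (intro exI[of _ "j'-j"]) simp
qed

lemma dist_sym: "dist_X a b = dist_X b a"
proof -
  have "(LEAST i. a i \<noteq> b i) = (LEAST i. b i \<noteq> a i)" by metis
  then show ?thesis by (auto simp: dist_X_def)
qed

lemma asym_sym: "asymptotic x y \<Longrightarrow> asymptotic y x"
  unfolding asymptotic_def using dist_sym by simp

lemma asym_level: assumes "asymptotic x y" shows "\<exists>K. \<forall>k\<ge>K. (T^^k) x M = (T^^k) y M"
proof -
  have "((1::real)/2)^M > 0" by simp
  then obtain K where K: "\<forall>k\<ge>K. norm (dist_X ((T^^k) x) ((T^^k) y) - 0) < (1/2)^M"
    using assms unfolding asymptotic_def LIMSEQ_iff by blast
  have "(T^^k) x M = (T^^k) y M" if k: "k \<ge> K" for k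
  proof (rule ccontr)
    let ?a = "(T^^k) x" and ?b = "(T^^k) y"
    assume ne: "?a M \<noteq> ?b M"
    then have "?a \<noteq> ?b" by auto
    have "\<bar>dist_X ?a ?b\<bar> < (1/2)^M" using K k by simp
    then have "dist_X ?a ?b < (1/2)^M" by (meson abs_ge_self le_less_trans)
    then have "((1::real)/2)^(LEAST i. ?a i \<noteq> ?b i) < (1/2)^M"
      using \<open>?a \<noteq> ?b\<close> by (simp add: dist_X_def)
    then have "M < (LEAST i. ?a i \<noteq> ?b i)"
      using power_strict_decreasing_iff[of "(1::real)/2"] by simp
    then show False using ne not_less_Least by blast
  qed
  then show ?thesis by blast
qed

lemma noasym:
  assumes x: "x \<in> X" and ds: "DS x d N" and z: "\<forall>k. (T^^k) y (Suc d) = (0,0)"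
    and a: "asymptotic x y"
  shows False
proof -
  obtain K where K: "\<forall>k\<ge>K. (T^^k) x (Suc d) = (T^^k) y (Suc d)" using asym_level[OF a] by blast
  obtain k' where k': "(T^^k') ((T^^K) x) (Suc d) \<noteq> (0,0)"
    using lemB[OF Tk_X[OF x] DS_Tk[OF x ds]] by blast
  have "(T^^k') ((T^^K) x) = (T^^(k'+K)) x" by (simp add: funpow_add)
  then show False using k' K z by (metis le_add2)
qed

theorem corollary3p10:
  shows "(\<forall>x y. x \<in> X \<longrightarrow> y \<in> X \<longrightarrow> x \<noteq> y \<longrightarrow> asymptotic x y \<longrightarrow>
            deg x \<noteq> \<infinity> \<and> deg y \<noteq> \<infinity> \<and>
            \<bar>int (the_enat (deg x)) - int (the_enat (deg y))\<bar> \<le> 1)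
       \<and> (\<forall>x \<in> X. x \<noteq> p_pt \<longrightarrow> \<not> asymptotic x p_pt)"
proof (rule conjI)
  show "\<forall>x\<in>X. x \<noteq> p_pt \<longrightarrow> \<not> asymptotic x p_pt"
  proof (intro ballI impI)
  have pz: "\<forall>k. (T^^k) p_pt n = (0,0)" for n unfolding Tk_p by (simp add: p_pt_def)
  fix x assume x: "x \<in> X" "x \<noteq> p_pt"
  then obtain d N where "DS x d N" using DS_ex by blast
  then show "\<not> asymptotic x p_pt" using noasym[OF x(1)] pz by blast
  qed
next
  have pz: "\<forall>k. (T^^k) p_pt n = (0,0)" for n unfolding Tk_p by (simp add: p_pt_def)
  show "\<forall>x y. x \<in> X \<longrightarrow> y \<in> X \<longrightarrow> x \<noteq> y \<longrightarrow> asymptotic x y \<longrightarrow>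
            deg x \<noteq> \<infinity> \<and> deg y \<noteq> \<infinity> \<and>
            \<bar>int (the_enat (deg x)) - int (the_enat (deg y))\<bar> \<le> 1"
  proof (intro allI impI)
  fix x y assume x: "x \<in> X" and y: "y \<in> X" and ne: "x \<noteq> y" and a: "asymptotic x y"
  have xp: "x \<noteq> p_pt"
  proof
    assume "x = p_pt"
    then have "y \<noteq> p_pt" using ne by simp
    then obtain e N where "DS y e N" using DS_ex y by blast
    then show False using noasym[OF y _ _ asym_sym[OF a]] pz \<open>x = p_pt\<close> by blast
  qed
  have yp: "y \<noteq> p_pt"
  proof
    assume "y = p_pt"
    obtain d N where "DS x d N" using DS_ex x xp by blast
    then show False using noasym[OF x _ _ a] pz \<open>y = p_pt\<close> by blast
  qed
  obtain d N where dx: "DS x d N" using DS_ex x xp by blast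
  obtain e N' where ey: "DS y e N'" using DS_ex y yp by blast
  have degs: "deg x = enat d" "deg y = enat e" using deg_DS x y dx ey by auto
  have "e \<le> Suc d"
  proof (rule ccontr)
    assume "\<not> e \<le> Suc d"
    then have "\<forall>k. (T^^k) y (Suc d) = (0,0)"
      using DS_low[OF Tk_X[OF y] DS_Tk[OF y ey]] by simp
    then show False using noasym[OF x dx _ a] by blast
  qed
  moreover have "d \<le> Suc e"
  proof (rule ccontr)
    assume "\<not> d \<le> Suc e"
    then have "\<forall>k. (T^^k) x (Suc e) = (0,0)"
      using DS_low[OF Tk_X[OF x] DS_Tk[OF x dx]] by simp
    then show False using noasym[OF y ey _ asym_sym[OF a]] by blast
  qed
  ultimately show "deg x \<noteq> \<infinity> \<and> deg y \<noteq> \<infinity> \<and>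
            \<bar>int (the_enat (deg x)) - int (the_enat (deg y))\<bar> \<le> 1"
    using degs by simp
  qed
qed

end
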